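(* For every formula $\varphi$ of propositional linear temporal logic, $\mathrm{LTL} \models \neg \Box (\varphi\leftrightarrow\bigcirc\diamondsuit\Box\neg\varphi)$.
   Context: Propositional linear temporal logic (LTL) with the "next" modality $\bigcirc$, "always" modality $\Box$ and $\diamondsuit\varphi\equiv\neg\Box\neg\varphi$, interpreted over infinite sequences of states $\mathcal{K}=(\eta_0,\eta_1,\dots)$ with $\mathcal{K}_i(\bigcirc\varphi)=\mathcal{K}_{i+1}(\varphi)$, $\mathcal{K}_i(\Box\varphi)=\mathfrak{tt}$ iff $\mathcal{K}_j(\varphi)=\mathfrak{tt}$ for all $j\ge i$. $\mathrm{LTL}\models\varphi$ means validity in all temporal structures. Here $\bigcirc$ denotes the LTL "next" operator. *)

theory Defs
  imports Main
begin

datatype 'v ltl =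
    Var 'v
  | FF
  | Imp "'v ltl" "'v ltl"
  | Next "'v ltl"
  | Always "'v ltl"

definition Neg :: "'v ltl \<Rightarrow> 'v ltl" where
  "Neg \<phi> = Imp \<phi> FF"

definition Conj :: "'v ltl \<Rightarrow> 'v ltl \<Rightarrow> 'v ltl" where
  "Conj \<phi> \<psi> = Neg (Imp \<phi> (Neg \<psi>))"

definition Iff :: "'v ltl \<Rightarrow> 'v ltl \<Rightarrow> 'v ltl" where
  "Iff \<phi> \<psi> = Conj (Imp \<phi> \<psi>) (Imp \<psi> \<phi>)"

definition Eventually :: "'v ltl \<Rightarrow> 'v ltl" where
  "Eventually \<phi> = Neg (Always (Neg \<phi>))"

text \<open>A temporal structure K = (eta_0, eta_1, ...) is a function from nat to
 states; a state assigns truth values to propositional variables.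
 holds K i phi means K_i(phi) = tt.\<close>

fun holds :: "(nat \<Rightarrow> 'v \<Rightarrow> bool) \<Rightarrow> nat \<Rightarrow> 'v ltl \<Rightarrow> bool" where
  "holds K i (Var v) = K i v"
| "holds K i FF = False"
| "holds K i (Imp \<phi> \<psi>) = (holds K i \<phi> \<longrightarrow> holds K i \<psi>)"
| "holds K i (Next \<phi>) = holds K (Suc i) \<phi>"
| "holds K i (Always \<phi>) = (\<forall>j\<ge>i. holds K j \<phi>)"

definition ltl_valid :: "'v ltl \<Rightarrow> bool" where
  "ltl_valid \<phi> = (\<forall>K i. holds K i \<phi>)"

end

theory Submission
  imports Defs
begin

lemma key:
  fixes P :: "nat \<Rightarrow> bool"
  assumes H: "\<forall>j\<ge>i. P j = (\<exists>k\<ge>Suc j. \<forall>m\<ge>k. \<not> P m)"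
  shows False
proof (cases "\<exists>j\<ge>i. \<exists>k\<ge>Suc j. \<forall>m\<ge>k. \<not> P m")
  case True
  then obtain j k where j: "j \<ge> i" "k \<ge> Suc j" "\<forall>m\<ge>k. \<not> P m" by blast
  have ik: "k \<ge> i" using j by simp
  have "P k = (\<exists>k'\<ge>Suc k. \<forall>m\<ge>k'. \<not> P m)" using H ik by blast
  moreover have "\<forall>m\<ge>Suc k. \<not> P m" using j by simp
  ultimately have "P k" by blast
  then show False using j by auto
next
  case False
  then have "\<forall>j\<ge>i. \<not> P j" using H by blast
  then have "\<forall>m\<ge>Suc i. \<not> P m" by simp
  then have "\<exists>k\<ge>Suc i. \<forall>m\<ge>k. \<not> P m" by blast
  then show False using False by blast
qed

theorem mainTheorem4:
  fixes \<phi> :: "'v ltl"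
  shows "ltl_valid (Neg (Always (Iff \<phi> (Next (Eventually (Always (Neg \<phi>)))))))"
  unfolding ltl_valid_def
proof (intro allI)
  fix K i
  show "holds K i (Neg (Always (Iff \<phi> (Next (Eventually (Always (Neg \<phi>)))))))"
  proof -
    have "\<not> (\<forall>j\<ge>i. holds K j \<phi> = (\<exists>k\<ge>Suc j. \<forall>m\<ge>k. \<not> holds K m \<phi>))"
      using key[of i "\<lambda>m. holds K m \<phi>"] by blast
    then show ?thesis
      by (simp only: Neg_def Iff_def Conj_def Eventually_def holds.simps) auto
  qed
qed

end
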